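(* Let $d\geq 2$ and let $\rho^s=\sum_{i,j=0}^{d-1}\rho^s_{ij}|i\rangle\langle j|$ be a state on $H_d=\mathbb{C}^d$. If for some $i\neq j$ $$|\rho^s_{ij}|>\frac{\sqrt{1-(\rho^s_{ii}+\rho^s_{jj})^2}}{2},$$ then there exists an incoherent operation $\Lambda$ on $H_d\otimes H_d$ such that $\Lambda(\rho^s\otimes|0\rangle\langle 0|)$ violates a Bell inequality (and hence is Bell-nonlocal).
   Context: Coherence is taken with respect to the computational basis $\{|0\rangle,\dots,|d-1\rangle\}$ of $H_d$ and the product computational basis of $H_d\otimes H_d$. The set $\mathcal{I}$ of incoherent states consists of the states diagonal in this basis. An incoherent operation is a completely positive trace-preserving map $\Lambda(\rho)=\sum_k K_k\rho K_k^\dagger$ with $K_k\mathcal{I}K_k^\dagger\subseteq\mathcal{I}$ for every Kraus operator $K_k$. A state is Bell-nonlocal if its measurement statistics do not admit a local hidden variable model. *)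

theory Defs
  imports Complex_Main
begin

text \<open>Matrices on C^n are represented as functions nat => nat => complex; only
  entries with both indices below n are meaningful. The computational basis of
  H_d (x) H_d is |a>|b> |-> index a*d+b.\<close>

type_synonym cmat = "nat \<Rightarrow> nat \<Rightarrow> complex"

definition mmul :: "nat \<Rightarrow> cmat \<Rightarrow> cmat \<Rightarrow> cmat" where
  "mmul n A B = (\<lambda>i j. \<Sum>k<n. A i k * B k j)"

definition adj :: "cmat \<Rightarrow> cmat" where
  "adj A = (\<lambda>i j. cnj (A j i))"

definition idm :: cmat where
  "idm = (\<lambda>i j. if i = j then 1 else 0)"

definition tr :: "nat \<Rightarrow> cmat \<Rightarrow> complex" where
  "tr n A = (\<Sum>i<n. A i i)"

definition hermitian :: "nat \<Rightarrow> cmat \<Rightarrow> bool" where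
  "hermitian n A \<longleftrightarrow> (\<forall>i<n. \<forall>j<n. A i j = cnj (A j i))"

definition psd :: "nat \<Rightarrow> cmat \<Rightarrow> bool" where
  "psd n A \<longleftrightarrow> hermitian n A \<and>
     (\<forall>v :: nat \<Rightarrow> complex. 0 \<le> Re (\<Sum>i<n. \<Sum>j<n. cnj (v i) * A i j * v j))"

definition is_state :: "nat \<Rightarrow> cmat \<Rightarrow> bool" where
  "is_state n \<rho> \<longleftrightarrow> psd n \<rho> \<and> tr n \<rho> = 1"

definition is_diag :: "nat \<Rightarrow> cmat \<Rightarrow> bool" where
  "is_diag n A \<longleftrightarrow> (\<forall>i<n. \<forall>j<n. i \<noteq> j \<longrightarrow> A i j = 0)"

definition incoherent_state :: "nat \<Rightarrow> cmat \<Rightarrow> bool" where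
  "incoherent_state n \<sigma> \<longleftrightarrow> is_state n \<sigma> \<and> is_diag n \<sigma>"

definition kron :: "nat \<Rightarrow> cmat \<Rightarrow> cmat \<Rightarrow> cmat" where
  "kron d A B = (\<lambda>p q. A (p div d) (q div d) * B (p mod d) (q mod d))"

definition proj0 :: cmat where
  "proj0 = (\<lambda>i j. if i = 0 \<and> j = 0 then 1 else 0)"

definition kraus_apply :: "nat \<Rightarrow> cmat list \<Rightarrow> cmat \<Rightarrow> cmat" where
  "kraus_apply n Ks \<rho> = (\<lambda>i j. \<Sum>K\<leftarrow>Ks. mmul n (mmul n K \<rho>) (adj K) i j)"

definition incoherent_kraus :: "nat \<Rightarrow> cmat list \<Rightarrow> bool" where
  "incoherent_kraus n Ks \<longleftrightarrow>
     (\<forall>i<n. \<forall>j<n. (\<Sum>K\<leftarrow>Ks. mmul n (adj K) K i j) = idm i j) \<and>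
     (\<forall>K\<in>set Ks. \<forall>\<sigma>. incoherent_state n \<sigma> \<longrightarrow> is_diag n (mmul n (mmul n K \<sigma>) (adj K)))"

definition povm :: "nat \<Rightarrow> nat \<Rightarrow> (nat \<Rightarrow> cmat) \<Rightarrow> bool" where
  "povm n k M \<longleftrightarrow> (\<forall>a<k. psd n (M a)) \<and>
     (\<forall>i<n. \<forall>j<n. (\<Sum>a<k. M a i j) = idm i j)"

definition qprob :: "nat \<Rightarrow> cmat \<Rightarrow> (nat \<Rightarrow> nat \<Rightarrow> cmat) \<Rightarrow> (nat \<Rightarrow> nat \<Rightarrow> cmat)
    \<Rightarrow> nat \<Rightarrow> nat \<Rightarrow> nat \<Rightarrow> nat \<Rightarrow> real" where
  "qprob d \<rho> MA MB a b x y = Re (tr (d * d) (mmul (d * d) (kron d (MA x a) (MB y b)) \<rho>))"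

definition lhv :: "nat \<Rightarrow> nat \<Rightarrow> nat \<Rightarrow> nat \<Rightarrow> (nat \<Rightarrow> nat \<Rightarrow> nat \<Rightarrow> nat \<Rightarrow> real) \<Rightarrow> bool" where
  "lhv mA mB oA oB P \<longleftrightarrow>
    (\<exists>(m::nat) (q::nat \<Rightarrow> real) (pA::nat \<Rightarrow> nat \<Rightarrow> nat \<Rightarrow> real) (pB::nat \<Rightarrow> nat \<Rightarrow> nat \<Rightarrow> real).
       (\<forall>l<m. 0 \<le> q l) \<and> (\<Sum>l<m. q l) = 1 \<and>
       (\<forall>x<mA. \<forall>l<m. (\<forall>a<oA. 0 \<le> pA x l a) \<and> (\<Sum>a<oA. pA x l a) = 1) \<and>
       (\<forall>y<mB. \<forall>l<m. (\<forall>b<oB. 0 \<le> pB y l b) \<and> (\<Sum>b<oB. pB y l b) = 1) \<and>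
       (\<forall>x<mA. \<forall>y<mB. \<forall>a<oA. \<forall>b<oB.
          P a b x y = (\<Sum>l<m. q l * pA x l a * pB y l b)))"

definition bell_nonlocal :: "nat \<Rightarrow> cmat \<Rightarrow> bool" where
  "bell_nonlocal d \<rho> \<longleftrightarrow>
    (\<exists>mA mB oA oB MA MB. (\<forall>x<mA. povm d oA (MA x)) \<and> (\<forall>y<mB. povm d oB (MB y)) \<and>
       \<not> lhv mA mB oA oB (qprob d \<rho> MA MB))"

definition bell_ineq :: "nat \<Rightarrow> nat \<Rightarrow> nat \<Rightarrow> nat \<Rightarrow> (nat \<Rightarrow> nat \<Rightarrow> nat \<Rightarrow> nat \<Rightarrow> real) \<Rightarrow> real \<Rightarrow> bool" where
  "bell_ineq mA mB oA oB c \<beta> \<longleftrightarrow>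
    (\<forall>P. lhv mA mB oA oB P \<longrightarrow>
       (\<Sum>x<mA. \<Sum>y<mB. \<Sum>a<oA. \<Sum>b<oB. c a b x y * P a b x y) \<le> \<beta>)"

definition violates_bell_inequality :: "nat \<Rightarrow> cmat \<Rightarrow> bool" where
  "violates_bell_inequality d \<rho> \<longleftrightarrow>
    (\<exists>mA mB oA oB MA MB c \<beta>. (\<forall>x<mA. povm d oA (MA x)) \<and> (\<forall>y<mB. povm d oB (MB y)) \<and>
       bell_ineq mA mB oA oB c \<beta> \<and>
       (\<Sum>x<mA. \<Sum>y<mB. \<Sum>a<oA. \<Sum>b<oB. c a b x y * qprob d \<rho> MA MB a b x y) > \<beta>)"

end

theory Submission
  imports Defs
begin


lemma split2:
  fixes f :: "nat \<Rightarrow> 'a::comm_monoid_add"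
  assumes "d \<ge> 2"
  shows "(\<Sum>i<d. f i) = f 0 + f 1 + (\<Sum>i\<in>{2..<d}. f i)"
proof -
  have "{..<d} = insert 0 (insert 1 {2..<d})" using assms by auto
  then show ?thesis by (simp add: add.assoc)
qed

lemma quad2:
  fixes a b g x y :: real
  assumes "0 \<le> a" "0 \<le> b" "g\<^sup>2 \<le> a * b"
  shows "0 \<le> a * x\<^sup>2 + b * y\<^sup>2 + 2 * g * x * y"
proof (cases "a = 0")
  case True
  then have "g\<^sup>2 \<le> 0" using assms by simp
  then have "g = 0" by (metis antisym zero_le_power2 power_eq_0_iff)
  then show ?thesis using True assms by simp
next
  case False
  then have ap: "a > 0" using assms by simp
  have "a * (a * x\<^sup>2 + b * y\<^sup>2 + 2 * g * x * y) = (a*x + g*y)\<^sup>2 + (a*b - g\<^sup>2) * y\<^sup>2"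
    by (simp add: power2_eq_square algebra_simps)
  also have "\<dots> \<ge> 0" using assms by simp
  finally show ?thesis using ap by (simp add: zero_le_mult_iff)
qed

definition blk :: "real \<Rightarrow> real \<Rightarrow> real \<Rightarrow> real \<Rightarrow> cmat" where
  "blk \<alpha> \<beta> \<gamma> e = (\<lambda>p q. complex_of_real
     (if p = 0 \<and> q = 0 then \<alpha> else if p = 1 \<and> q = 1 then \<beta>
      else if (p = 0 \<and> q = 1) \<or> (p = 1 \<and> q = 0) then \<gamma> else if p = q then e else 0))"

lemma blk_row:
  assumes "d \<ge> 2" "i < d"
  shows "(\<Sum>j<d. blk \<alpha> \<beta> \<gamma> e i j * v j) =
    (if i = 0 then of_real \<alpha> * v 0 + of_real \<gamma> * v 1 else if i = 1 then of_real \<gamma> * v 0 + of_real \<beta> * v 1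
     else of_real e * v i)"
proof -
  have "(\<Sum>j<d. blk \<alpha> \<beta> \<gamma> e i j * v j) = blk \<alpha> \<beta> \<gamma> e i 0 * v 0 + blk \<alpha> \<beta> \<gamma> e i 1 * v 1
     + (\<Sum>j\<in>{2..<d}. blk \<alpha> \<beta> \<gamma> e i j * v j)" by (rule split2[OF assms(1)])
  also have "(\<Sum>j\<in>{2..<d}. blk \<alpha> \<beta> \<gamma> e i j * v j) = (\<Sum>j\<in>{2..<d}. if j = i then of_real e * v i else 0)"
    by (rule sum.cong) (auto simp: blk_def)
  also have "\<dots> = (if i \<in> {2..<d} then of_real e * v i else 0)" by (simp add: sum.delta')
  finally show ?thesis using assms by (auto simp: blk_def)
qed

lemma psd_blk:
  assumes "d \<ge> 2" "0 \<le> \<alpha>" "0 \<le> \<beta>" "\<gamma>\<^sup>2 \<le> \<alpha> * \<beta>" "0 \<le> e"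
  shows "psd d (blk \<alpha> \<beta> \<gamma> e)"
  unfolding psd_def
proof (intro conjI allI)
  show "hermitian d (blk \<alpha> \<beta> \<gamma> e)" unfolding hermitian_def blk_def by auto
  fix v :: "nat \<Rightarrow> complex"
  have "(\<Sum>i<d. \<Sum>j<d. cnj (v i) * blk \<alpha> \<beta> \<gamma> e i j * v j)
     = (\<Sum>i<d. cnj (v i) * (\<Sum>j<d. blk \<alpha> \<beta> \<gamma> e i j * v j))"
    by (simp add: sum_distrib_left mult.assoc)
  also have "\<dots> = (\<Sum>i<d. cnj (v i) * (if i = 0 then of_real \<alpha> * v 0 + of_real \<gamma> * v 1 else if i = 1 then of_real \<gamma> * v 0 + of_real \<beta> * v 1
     else of_real e * v i))"
    by (rule sum.cong) (simp_all add: blk_row[OF assms(1)])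
  also have "\<dots> = cnj (v 0) * (of_real \<alpha> * v 0 + of_real \<gamma> * v 1) + cnj (v 1) * (of_real \<gamma> * v 0 + of_real \<beta> * v 1)
     + (\<Sum>i\<in>{2..<d}. of_real e * (cnj (v i) * v i))"
    by (subst split2[OF assms(1)]) (auto intro!: sum.cong)
  finally have eq: "(\<Sum>i<d. \<Sum>j<d. cnj (v i) * blk \<alpha> \<beta> \<gamma> e i j * v j) = \<dots>" .
  have r1: "Re (cnj (v 0) * (of_real \<alpha> * v 0 + of_real \<gamma> * v 1) + cnj (v 1) * (of_real \<gamma> * v 0 + of_real \<beta> * v 1))
     = (\<alpha> * (Re (v 0))\<^sup>2 + \<beta> * (Re (v 1))\<^sup>2 + 2 * \<gamma> * Re (v 0) * Re (v 1))
     + (\<alpha> * (Im (v 0))\<^sup>2 + \<beta> * (Im (v 1))\<^sup>2 + 2 * \<gamma> * Im (v 0) * Im (v 1))"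
    by (simp add: power2_eq_square algebra_simps)
  have "0 \<le> \<dots>" by (rule add_nonneg_nonneg; rule quad2[OF assms(2-4)])
  moreover have "Re (\<Sum>i\<in>{2..<d}. of_real e * (cnj (v i) * v i)) \<ge> 0"
    unfolding Re_sum by (intro sum_nonneg) (simp add: assms(5))
  ultimately show "0 \<le> Re (\<Sum>i<d. \<Sum>j<d. cnj (v i) * blk \<alpha> \<beta> \<gamma> e i j * v j)"
    unfolding eq using r1 by simp
qed



definition chsh :: "nat \<Rightarrow> nat \<Rightarrow> nat \<Rightarrow> nat \<Rightarrow> real" where
  "chsh a b x y = (if a = b then 1 else -1) * (if x = 1 \<and> y = 1 then -1 else 1)"

lemma chsh_local:
  fixes a0 a1 b0 b1 :: real
  assumes "\<bar>a0\<bar> \<le> 1" "\<bar>a1\<bar> \<le> 1" "\<bar>b0\<bar> \<le> 1" "\<bar>b1\<bar> \<le> 1"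
  shows "a0*b0 + a0*b1 + a1*b0 - a1*b1 \<le> 2"
proof -
  have "a0 * (b0 + b1) \<le> \<bar>b0 + b1\<bar>"
  proof -
    have "a0 * (b0 + b1) \<le> \<bar>a0\<bar> * \<bar>b0 + b1\<bar>" by (metis abs_ge_self abs_mult)
    also have "\<dots> \<le> 1 * \<bar>b0 + b1\<bar>" using assms(1) by (intro mult_right_mono) auto
    finally show ?thesis by simp
  qed
  moreover have "a1 * (b0 - b1) \<le> \<bar>b0 - b1\<bar>"
  proof -
    have "a1 * (b0 - b1) \<le> \<bar>a1\<bar> * \<bar>b0 - b1\<bar>" by (metis abs_ge_self abs_mult)
    also have "\<dots> \<le> 1 * \<bar>b0 - b1\<bar>" using assms(2) by (intro mult_right_mono) auto
    finally show ?thesis by simp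
  qed
  moreover have "\<bar>b0 + b1\<bar> + \<bar>b0 - b1\<bar> \<le> 2" using assms(3,4) by linarith
  ultimately show ?thesis by (simp add: algebra_simps)
qed

lemma chsh_bell: "bell_ineq 2 2 2 2 chsh 2"
  unfolding bell_ineq_def lhv_def
proof (intro allI impI, elim exE conjE)
  fix P :: "nat \<Rightarrow> nat \<Rightarrow> nat \<Rightarrow> nat \<Rightarrow> real" and m :: nat and q :: "nat \<Rightarrow> real" and pA pB :: "nat \<Rightarrow> nat \<Rightarrow> nat \<Rightarrow> real"
  assume q0: "\<forall>l<m. 0 \<le> q l" and q1: "(\<Sum>l<m. q l) = 1"
    and hA: "\<forall>x<2. \<forall>l<m. (\<forall>a<2. 0 \<le> pA x l a) \<and> (\<Sum>a<2. pA x l a) = (1::real)"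
    and hB: "\<forall>y<2. \<forall>l<m. (\<forall>b<2. 0 \<le> pB y l b) \<and> (\<Sum>b<2. pB y l b) = (1::real)"
    and hP: "\<forall>x<2. \<forall>y<2. \<forall>a<2. \<forall>b<2. P a b x y = (\<Sum>l<m. q l * pA x l a * pB y l b)"
  define F where "F l = (\<Sum>x<2. \<Sum>y<2. \<Sum>a<2. \<Sum>b<2. chsh a b x y * (q l * pA x l a * pB y l b))" for l
  have eq: "(\<Sum>x<2. \<Sum>y<2. \<Sum>a<2. \<Sum>b<2. chsh a b x y * P a b x y) = (\<Sum>l<m. F l)"
  proof -
    have "(\<Sum>x<2. \<Sum>y<2. \<Sum>a<2. \<Sum>b<2. chsh a b x y * P a b x y) =
       (\<Sum>x<2. \<Sum>y<2. \<Sum>a<2. \<Sum>b<2. \<Sum>l<m. chsh a b x y * (q l * pA x l a * pB y l b))"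
      using hP by (intro sum.cong refl) (simp add: sum_distrib_left)
    also have "\<dots> = (\<Sum>l<m. F l)" unfolding F_def
      by (simp add: numeral_2_eq_2 sum.distrib)
    finally show ?thesis .
  qed
  have Fl: "F l \<le> 2 * q l" if l: "l < m" for l
  proof -
    have a0: "pA x l 0 + pA x l 1 = 1" "0 \<le> pA x l 0" "0 \<le> pA x l 1" if "x < 2" for x
      using hA that l by (auto simp: numeral_2_eq_2)
    have b0: "pB x l 0 + pB x l 1 = 1" "0 \<le> pB x l 0" "0 \<le> pB x l 1" if "x < 2" for x
      using hB that l by (auto simp: numeral_2_eq_2)
    define A0 where "A0 = pA 0 l 0 - pA 0 l 1"
    define A1 where "A1 = pA 1 l 0 - pA 1 l 1"
    define B0 where "B0 = pB 0 l 0 - pB 0 l 1"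
    define B1 where "B1 = pB 1 l 0 - pB 1 l 1"
    have "F l = q l * (A0*B0 + A0*B1 + A1*B0 - A1*B1)"
      unfolding F_def A0_def A1_def B0_def B1_def chsh_def
      by (simp add: numeral_2_eq_2 algebra_simps)
    moreover have "A0*B0 + A0*B1 + A1*B0 - A1*B1 \<le> 2"
      apply (rule chsh_local)
      using a0[of 0] a0[of 1] b0[of 0] b0[of 1] unfolding A0_def A1_def B0_def B1_def by auto
    ultimately show ?thesis using q0 l by (simp add: mult_left_mono mult.commute)
  qed
  have "(\<Sum>l<m. F l) \<le> (\<Sum>l<m. 2 * q l)" using Fl by (intro sum_mono) simp
  also have "\<dots> = 2" using q1 by (simp add: sum_distrib_left[symmetric])
  finally show "(\<Sum>x<2. \<Sum>y<2. \<Sum>a<2. \<Sum>b<2. chsh a b x y * P a b x y) \<le> 2" using eq by simp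
qed

lemma violates_nonlocal:
  assumes "violates_bell_inequality d \<rho>" shows "bell_nonlocal d \<rho>"
proof -
  from assms obtain mA mB oA oB MA MB c \<beta> where h: "(\<forall>x<mA. povm d oA (MA x))" "(\<forall>y<mB. povm d oB (MB y))"
     "bell_ineq mA mB oA oB c \<beta>"
     "(\<Sum>x<mA. \<Sum>y<mB. \<Sum>a<oA. \<Sum>b<oB. c a b x y * qprob d \<rho> MA MB a b x y) > \<beta>"
    unfolding violates_bell_inequality_def by blast
  have "\<not> lhv mA mB oA oB (qprob d \<rho> MA MB)"
    using h(3,4) unfolding bell_ineq_def by force
  then show ?thesis unfolding bell_nonlocal_def using h(1,2) by blast
qed



definition pv :: "real \<Rightarrow> real \<Rightarrow> real \<Rightarrow> nat \<Rightarrow> cmat" where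
  "pv \<alpha> \<beta> \<gamma> a = blk (if a = 0 then \<alpha> else 1 - \<alpha>) (if a = 0 then \<beta> else 1 - \<beta>)
      (if a = 0 then \<gamma> else - \<gamma>) (if a = 0 then 1 else 0)"

lemma povm_pv:
  assumes "d \<ge> 2" "0 \<le> \<alpha>" "\<alpha> \<le> 1" "0 \<le> \<beta>" "\<beta> \<le> 1" "\<gamma>\<^sup>2 \<le> \<alpha> * \<beta>" "\<gamma>\<^sup>2 \<le> (1 - \<alpha>) * (1 - \<beta>)"
  shows "povm d 2 (pv \<alpha> \<beta> \<gamma>)"
  unfolding povm_def
proof (intro conjI allI impI)
  fix a :: nat assume "a < 2"
  then have "a = 0 \<or> a = 1" by auto
  then show "psd d (pv \<alpha> \<beta> \<gamma> a)"
  proof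
    assume "a = 0" then show ?thesis unfolding pv_def using assms by (simp add: psd_blk)
  next
    assume "a = 1" then show ?thesis unfolding pv_def using assms
      by (intro psd_blk) (simp_all add: mult.commute)
  qed
next
  fix i j assume "i < d" "j < d"
  show "(\<Sum>a<2. pv \<alpha> \<beta> \<gamma> a i j) = idm i j"
    by (simp add: numeral_2_eq_2 pv_def blk_def idm_def)
qed

lemma tr_sparse:
  fixes G S :: cmat
  assumes "e < n" "e \<noteq> 0"
    and hS: "\<And>k p. k < n \<Longrightarrow> p < n \<Longrightarrow> \<not> ((k = 0 \<or> k = e) \<and> (p = 0 \<or> p = e)) \<Longrightarrow> S k p = 0"
  shows "tr n (mmul n G S) = G 0 0 * S 0 0 + G 0 e * S e 0 + G e 0 * S 0 e + G e e * S e e"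
proof -
  have inner: "(\<Sum>k<n. G p k * S k p) = (\<Sum>k\<in>{0,e}. G p k * S k p)" if "p < n" for p
    using assms that by (intro sum.mono_neutral_right) auto
  have "tr n (mmul n G S) = (\<Sum>p<n. \<Sum>k\<in>{0,e}. G p k * S k p)"
    unfolding tr_def mmul_def by (rule sum.cong[OF refl]) (simp add: inner)
  also have "\<dots> = (\<Sum>p\<in>{0,e}. \<Sum>k\<in>{0,e}. G p k * S k p)"
    using assms by (intro sum.mono_neutral_right) auto
  also have "\<dots> = G 0 0 * S 0 0 + G 0 e * S e 0 + G e 0 * S 0 e + G e e * S e e"
    using assms by (simp add: algebra_simps)
  finally show ?thesis .
qed

definition Sm :: "nat \<Rightarrow> complex \<Rightarrow> real \<Rightarrow> complex \<Rightarrow> cmat" where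
  "Sm d a r b = (\<lambda>k p. if k = 0 \<and> p = 0 then a else if k = 0 \<and> p = d + 1 then of_real r
      else if k = d + 1 \<and> p = 0 then of_real r else if k = d + 1 \<and> p = d + 1 then b else 0)"

lemma divmod_e: "(d::nat) \<ge> 2 \<Longrightarrow> (d + 1) div d = 1 \<and> (d + 1) mod d = 1"
  by (simp add: le_div_geq le_mod_geq)

lemma qprob_blk:
  assumes "d \<ge> 2" and hS: "\<And>k p. k < d * d \<Longrightarrow> p < d * d \<Longrightarrow> \<sigma> k p = Sm d a r b k p"
    and "MA x u = blk \<alpha>1 \<beta>1 \<gamma>1 ea" "MB y v = blk \<alpha>2 \<beta>2 \<gamma>2 eb"
  shows "qprob d \<sigma> MA MB u v x y = \<alpha>1 * \<alpha>2 * Re a + 2 * \<gamma>1 * \<gamma>2 * r + \<beta>1 * \<beta>2 * Re b"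
proof -
  have en: "d + 1 < d * d" using assms(1)
  proof -
    have "2 * d \<le> d * d" using assms(1) by simp
    then show ?thesis using assms(1) by linarith
  qed
  have "tr (d*d) (mmul (d*d) (kron d (MA x u) (MB y v)) \<sigma>) = tr (d*d) (mmul (d*d) (kron d (MA x u) (MB y v)) (Sm d a r b))"
    unfolding tr_def mmul_def by (intro sum.cong refl) (simp add: hS)
  also have "\<dots> = kron d (MA x u) (MB y v) 0 0 * Sm d a r b 0 0 + kron d (MA x u) (MB y v) 0 (d+1) * Sm d a r b (d+1) 0
     + kron d (MA x u) (MB y v) (d+1) 0 * Sm d a r b 0 (d+1) + kron d (MA x u) (MB y v) (d+1) (d+1) * Sm d a r b (d+1) (d+1)"
    by (rule tr_sparse[OF en]) (auto simp: Sm_def)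
  also have "\<dots> = of_real \<alpha>1 * of_real \<alpha>2 * a + 2 * of_real \<gamma>1 * of_real \<gamma>2 * of_real r + of_real \<beta>1 * of_real \<beta>2 * b"
    using divmod_e[OF assms(1)] assms(3,4) by (simp add: kron_def Sm_def blk_def algebra_simps)
  finally show ?thesis unfolding qprob_def by simp
qed



lemma quantum_violation:
  assumes d2: "d \<ge> 2" and r0: "r > 0" and ab: "Re a + Re b = 1"
    and hS: "\<And>k p. k < d * d \<Longrightarrow> p < d * d \<Longrightarrow> \<sigma> k p = Sm d a r b k p"
  shows "violates_bell_inequality d \<sigma>"
proof -
  define t where "t = r"
  define MA where "MA x = (if x = (0::nat) then pv 1 0 0 else pv (1/2) (1/2) (1/2))" for x
  define MB where "MB y = pv (1/(1+t\<^sup>2)) (t\<^sup>2/(1+t\<^sup>2)) ((if y = (0::nat) then 1 else -1) * t/(1+t\<^sup>2))" for y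
  have t0: "t > 0" using r0 t_def by simp
  have povA: "\<forall>x<2. povm d 2 (MA x)"
  proof (intro allI impI)
    fix x :: nat assume "x < 2"
    then show "povm d 2 (MA x)" unfolding MA_def using d2
      by (auto intro!: povm_pv simp: power2_eq_square)
  qed
  have povB: "\<forall>y<2. povm d 2 (MB y)"
  proof (intro allI impI)
    fix y :: nat assume "y < 2"
    have p: "1 + t\<^sup>2 > 0" by (simp add: add_pos_nonneg)
    show "povm d 2 (MB y)" unfolding MB_def
    proof (rule povm_pv[OF d2])
      show "0 \<le> 1 / (1 + t\<^sup>2)" using p by simp
      show "1 / (1 + t\<^sup>2) \<le> 1" using p by simp
      show "0 \<le> t\<^sup>2 / (1 + t\<^sup>2)" using p by simp
      show "t\<^sup>2 / (1 + t\<^sup>2) \<le> 1" using p by simp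
      show "((if y = 0 then 1 else - 1) * t / (1 + t\<^sup>2))\<^sup>2 \<le> 1 / (1 + t\<^sup>2) * (t\<^sup>2 / (1 + t\<^sup>2))"
        using p by (simp add: power2_eq_square field_simps)
      show "((if y = 0 then 1 else - 1) * t / (1 + t\<^sup>2))\<^sup>2 \<le> (1 - 1 / (1 + t\<^sup>2)) * (1 - t\<^sup>2 / (1 + t\<^sup>2))"
        using p by (simp add: power2_eq_square field_simps)
    qed
  qed
  define c0 where "c0 = 1/(1+t\<^sup>2)"
  define c1 where "c1 = t\<^sup>2/(1+t\<^sup>2)"
  define g where "g = t/(1+t\<^sup>2)"
  have p: "1 + t\<^sup>2 > 0" by (simp add: add_pos_nonneg)
  have c01: "1 - c0 = c1" "1 - c1 = c0" unfolding c0_def c1_def using p by (simp_all add: field_simps)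
  have qp: "qprob d \<sigma> MA MB u v x y =
     (if u = 0 then fst (pA x) else 1 - fst (pA x)) * (if v = 0 then c0 else c1) * Re a
     + 2 * (if u = 0 then snd (snd (pA x)) else - snd (snd (pA x))) * (if v = 0 then (if y = 0 then 1 else -1) * g else - ((if y = 0 then 1 else -1) * g)) * r
     + (if u = 0 then fst (snd (pA x)) else 1 - fst (snd (pA x))) * (if v = 0 then c1 else c0) * Re b"
    if "pA = (\<lambda>x. if x = (0::nat) then (1::real, 0::real, 0::real) else (1/2, 1/2, 1/2))" for u v x y pA
    by (rule qprob_blk[where ea = "if u = 0 then 1 else 0" and eb = "if v = 0 then 1 else 0", OF d2 hS])
      (auto simp: MA_def MB_def pv_def that c01 c0_def[symmetric] c1_def[symmetric] g_def[symmetric] times_divide_eq_right[symmetric])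
  define pA where "pA = (\<lambda>x. if x = (0::nat) then (1::real, 0::real, 0::real) else (1/2, 1/2, 1/2))"
  have val: "(\<Sum>x<2. \<Sum>y<2. \<Sum>u<2. \<Sum>v<2. chsh u v x y * qprob d \<sigma> MA MB u v x y) > 2"
  proof -
    have "(\<Sum>x<2. \<Sum>y<2. \<Sum>u<2. \<Sum>v<2. chsh u v x y * qprob d \<sigma> MA MB u v x y)
       = 2 * (c0 - c1) * (Re a + Re b) + 8 * g * r"
      unfolding qp[OF pA_def]
      by (simp add: numeral_2_eq_2 chsh_def pA_def algebra_simps)
    also have "\<dots> = 2 * ((1 - r\<^sup>2) / (1 + r\<^sup>2)) + 8 * (r\<^sup>2 / (1 + r\<^sup>2))"
      using ab unfolding t_def c0_def c1_def g_def
      by (simp add: diff_divide_distrib power2_eq_square)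
    also have "\<dots> = (2 * (1 - r\<^sup>2) + 8 * r\<^sup>2) / (1 + r\<^sup>2)"
      by (simp only: times_divide_eq_right add_divide_distrib)
    also have "\<dots> = (2 + 6 * r\<^sup>2) / (1 + r\<^sup>2)"
    proof -
      have num: "2 * (1 - r\<^sup>2) + 8 * r\<^sup>2 = 2 + 6 * r\<^sup>2" by (simp add: algebra_simps)
      show ?thesis by (simp only: num)
    qed
    also have "\<dots> > 2" using r0 by (simp add: field_simps add_pos_nonneg)
    finally show ?thesis .
  qed
  show ?thesis unfolding violates_bell_inequality_def
    using povA povB chsh_bell val by blast
qed



lemma sum_one:
  fixes f :: "nat \<Rightarrow> 'a::comm_monoid_add"
  assumes "a < n" "\<And>k. k < n \<Longrightarrow> k \<noteq> a \<Longrightarrow> f k = 0"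
  shows "(\<Sum>k<n. f k) = f a"
proof -
  have "(\<Sum>k<n. f k) = (\<Sum>k\<in>{a}. f k)" using assms by (intro sum.mono_neutral_right) auto
  then show ?thesis by simp
qed

lemma sum_two:
  fixes f :: "nat \<Rightarrow> 'a::comm_monoid_add"
  assumes "a < n" "b < n" "a \<noteq> b" "\<And>k. k < n \<Longrightarrow> k \<noteq> a \<Longrightarrow> k \<noteq> b \<Longrightarrow> f k = 0"
  shows "(\<Sum>k<n. f k) = f a + f b"
proof -
  have "(\<Sum>k<n. f k) = (\<Sum>k\<in>{a,b}. f k)" using assms by (intro sum.mono_neutral_right) auto
  then show ?thesis using assms(3) by simp
qed

lemma incoh_col:
  assumes "\<And>k p q. k < n \<Longrightarrow> p < n \<Longrightarrow> q < n \<Longrightarrow> p \<noteq> q \<Longrightarrow> K p k * cnj (K q k) = 0"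
  shows "incoherent_state n \<sigma> \<Longrightarrow> is_diag n (mmul n (mmul n K \<sigma>) (adj K))"
proof -
  assume "incoherent_state n \<sigma>"
  then have dg: "\<And>k l. k < n \<Longrightarrow> l < n \<Longrightarrow> k \<noteq> l \<Longrightarrow> \<sigma> k l = 0"
    unfolding incoherent_state_def is_diag_def by blast
  show ?thesis unfolding is_diag_def
  proof (intro allI impI)
    fix p q assume pq: "p < n" "q < n" "p \<noteq> q"
    have "mmul n (mmul n K \<sigma>) (adj K) p q = (\<Sum>l<n. (\<Sum>k<n. K p k * \<sigma> k l) * cnj (K q l))"
      unfolding mmul_def adj_def by simp
    also have "\<dots> = (\<Sum>l<n. K p l * \<sigma> l l * cnj (K q l))"
    proof (rule sum.cong[OF refl])
      fix l assume "l \<in> {..<n}"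
      then have "(\<Sum>k<n. K p k * \<sigma> k l) = K p l * \<sigma> l l"
        using dg by (intro sum_one) auto
      then show "(\<Sum>k<n. K p k * \<sigma> k l) * cnj (K q l) = K p l * \<sigma> l l * cnj (K q l)" by simp
    qed
    also have "\<dots> = (\<Sum>l<n. \<sigma> l l * (K p l * cnj (K q l)))" by (simp add: algebra_simps)
    also have "\<dots> = 0" using assms pq by (intro sum.neutral) auto
    finally show "mmul n (mmul n K \<sigma>) (adj K) p q = 0" .
  qed
qed

definition Kone :: "nat \<Rightarrow> nat \<Rightarrow> nat \<Rightarrow> complex \<Rightarrow> cmat" where
  "Kone I0 J0 e u = (\<lambda>p k. if p = 0 \<and> k = I0 then 1 else if p = e \<and> k = J0 then u else 0)"

definition Em :: "nat \<Rightarrow> nat \<Rightarrow> nat \<Rightarrow> cmat" where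
  "Em I0 J0 m = (\<lambda>p k. if m \<noteq> I0 \<and> m \<noteq> J0 \<and> p = 0 \<and> k = m then 1 else 0)"

context
  fixes n I0 J0 e :: nat and u :: complex
  assumes I0: "I0 < n" and J0: "J0 < n" and IJ: "I0 \<noteq> J0" and en: "e < n" and e0: "e \<noteq> 0"
begin

lemma Kone_left: "mmul n (Kone I0 J0 e u) R p l = (if p = 0 then R I0 l else if p = e then u * R J0 l else 0)"
proof -
  consider "p = 0" | "p = e" | "p \<noteq> 0 \<and> p \<noteq> e" by blast
  then show ?thesis
  proof cases
    case 1
    then show ?thesis unfolding mmul_def using I0 e0 by (subst sum_one[where a = I0]) (auto simp: Kone_def)
  next
    case 2
    then show ?thesis unfolding mmul_def using J0 e0 by (subst sum_one[where a = J0]) (auto simp: Kone_def)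
  qed (simp add: mmul_def Kone_def)
qed

lemma Kone_right: "mmul n X (adj (Kone I0 J0 e u)) p q = (if q = 0 then X p I0 else if q = e then X p J0 * cnj u else 0)"
proof -
  consider "q = 0" | "q = e" | "q \<noteq> 0 \<and> q \<noteq> e" by blast
  then show ?thesis
  proof cases
    case 1
    then show ?thesis unfolding mmul_def adj_def using I0 e0 by (subst sum_one[where a = I0]) (auto simp: Kone_def)
  next
    case 2
    then show ?thesis unfolding mmul_def adj_def using J0 e0 by (subst sum_one[where a = J0]) (auto simp: Kone_def)
  qed (simp add: mmul_def adj_def Kone_def)
qed

lemma Em_conj: assumes "m < n"
  shows "mmul n (mmul n (Em I0 J0 m) R) (adj (Em I0 J0 m)) p q =
    (if m \<noteq> I0 \<and> m \<noteq> J0 \<and> p = 0 \<and> q = 0 then R m m else 0)"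
proof -
  have l: "mmul n (Em I0 J0 m) R p l = (if m \<noteq> I0 \<and> m \<noteq> J0 \<and> p = 0 then R m l else 0)" for l
    unfolding mmul_def using assms by (subst sum_one[where a = m]) (auto simp: Em_def)
  show ?thesis unfolding mmul_def[of n "mmul n (Em I0 J0 m) R"] l adj_def using assms
    by (subst sum_one[where a = m]) (auto simp: Em_def)
qed

lemma Kone_tp: "mmul n (adj (Kone I0 J0 e u)) (Kone I0 J0 e u) p q =
   (if p = I0 \<and> q = I0 then 1 else if p = J0 \<and> q = J0 then cnj u * u else 0)"
  unfolding mmul_def adj_def using en e0 IJ
  by (subst sum_two[where a = 0 and b = e]) (auto simp: Kone_def)

lemma Em_tp: assumes "m < n"
  shows "mmul n (adj (Em I0 J0 m)) (Em I0 J0 m) p q = (if m \<noteq> I0 \<and> m \<noteq> J0 \<and> p = m \<and> q = m then 1 else 0)"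
  unfolding mmul_def adj_def using assms
  by (subst sum_one[where a = 0]) (auto simp: Em_def)

end



lemma trace_kron:
  assumes "d > 0"
  shows "(\<Sum>m<d*d. kron d \<rho> proj0 m m) = (\<Sum>a<d. \<rho> a a)"
proof -
  have "(\<Sum>m<d*d. kron d \<rho> proj0 m m) = (\<Sum>m\<in>(\<lambda>a. a * d) ` {..<d}. kron d \<rho> proj0 m m)"
  proof (rule sum.mono_neutral_right)
    show "(\<lambda>a. a * d) ` {..<d} \<subseteq> {..<d*d}" using assms by auto
    show "\<forall>i\<in>{..<d * d} - (\<lambda>a. a * d) ` {..<d}. kron d \<rho> proj0 i i = 0"
    proof
      fix m assume m: "m \<in> {..<d * d} - (\<lambda>a. a * d) ` {..<d}"
      have "m mod d \<noteq> 0"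
      proof
        assume "m mod d = 0"
        then have "m = (m div d) * d" using div_mult_mod_eq[of m d] by simp
        moreover have "m div d < d" using m by (simp add: less_mult_imp_div_less)
        ultimately show False using m by blast
      qed
      then show "kron d \<rho> proj0 m m = 0" by (simp add: kron_def proj0_def)
    qed
  qed simp
  also have "\<dots> = (\<Sum>a<d. kron d \<rho> proj0 (a*d) (a*d))"
    using assms by (subst sum.reindex) (auto simp: inj_on_def)
  also have "\<dots> = (\<Sum>a<d. \<rho> a a)" using assms by (simp add: kron_def proj0_def)
  finally show ?thesis .
qed

theorem theorem2:
  fixes d :: nat and \<rho> :: cmat and i j :: nat
  assumes "d \<ge> 2"
    and "is_state d \<rho>"
    and "i < d" and "j < d" and "i \<noteq> j"
    and "cmod (\<rho> i j) > sqrt (1 - (Re (\<rho> i i) + Re (\<rho> j j))\<^sup>2) / 2"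
  shows "\<exists>Ks. incoherent_kraus (d * d) Ks \<and>
           violates_bell_inequality d (kraus_apply (d * d) Ks (kron d \<rho> proj0)) \<and>
           bell_nonlocal d (kraus_apply (d * d) Ks (kron d \<rho> proj0))"
proof -
  define n where "n = d * d"
  define I0 where "I0 = i * d"
  define J0 where "J0 = j * d"
  define e where "e = d + 1"
  define r where "r = cmod (\<rho> i j)"
  define u where "u = \<rho> i j / of_real r"
  define R where "R = kron d \<rho> proj0"
  define Ks where "Ks = Kone I0 J0 e u # map (Em I0 J0) [0..<n]"
  have d2: "d \<ge> 2" by fact
  have diag: "Re (\<rho> a a) \<ge> 0" if "a < d" for a
  proof -
    define v :: "nat \<Rightarrow> complex" where "v k = (if k = a then 1 else 0)" for k
    have "0 \<le> Re (\<Sum>i<d. \<Sum>j<d. cnj (v i) * \<rho> i j * v j)"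
      using assms(2) unfolding is_state_def psd_def by blast
    also have "(\<Sum>i<d. \<Sum>j<d. cnj (v i) * \<rho> i j * v j) = (\<Sum>j<d. cnj (v a) * \<rho> a j * v j)"
      using that by (intro sum_one) (auto simp: v_def)
    also have "\<dots> = cnj (v a) * \<rho> a a * v a"
      using that by (intro sum_one) (auto simp: v_def)
    finally show ?thesis by (simp add: v_def)
  qed
  have tr1': "(\<Sum>a<d. Re (\<rho> a a)) = 1"
  proof -
    have "(\<Sum>a<d. \<rho> a a) = 1" using assms(2) unfolding is_state_def tr_def by blast
    then have "Re (\<Sum>a<d. \<rho> a a) = 1" by simp
    then show ?thesis by (simp add: Re_sum)
  qed
  have "(\<Sum>a\<in>{i,j}. Re (\<rho> a a)) \<le> (\<Sum>a<d. Re (\<rho> a a))"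
    using assms(3,4) diag by (intro sum_mono2) auto
  then have s1: "Re (\<rho> i i) + Re (\<rho> j j) \<le> 1" using assms(5) tr1' by simp
  have s0: "0 \<le> Re (\<rho> i i) + Re (\<rho> j j)" using diag assms(3,4) by (simp add: add_nonneg_nonneg)
  have "(Re (\<rho> i i) + Re (\<rho> j j))\<^sup>2 \<le> 1" using s0 s1 by (simp add: power_le_one)
  then have "sqrt (1 - (Re (\<rho> i i) + Re (\<rho> j j))\<^sup>2) \<ge> 0" by simp
  then have r0: "r > 0" unfolding r_def using assms(6) by linarith
  have I0n: "I0 < n" unfolding I0_def n_def using assms(3) d2 by simp
  have J0n: "J0 < n" unfolding J0_def n_def using assms(4) d2 by simp
  have IJ: "I0 \<noteq> J0" unfolding I0_def J0_def using assms(5) d2 by simp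
  have en: "e < n" unfolding e_def n_def
  proof -
    have "2 * d \<le> d * d" using d2 by simp
    then show "d + 1 < d * d" using d2 by linarith
  qed
  have e0: "e \<noteq> 0" unfolding e_def by simp
  have herm: "\<And>a b. a < d \<Longrightarrow> b < d \<Longrightarrow> \<rho> a b = cnj (\<rho> b a)"
    using assms(2) unfolding is_state_def psd_def hermitian_def by blast
  have tr1: "(\<Sum>a<d. \<rho> a a) = 1" using assms(2) unfolding is_state_def tr_def by blast
  have uu: "cnj u * u = 1"
  proof -
    have "cnj u * u = (cnj (\<rho> i j) * \<rho> i j) / of_real (r * r)" unfolding u_def by (simp add: field_simps)
    also have "cnj (\<rho> i j) * \<rho> i j = of_real (r * r)" unfolding r_def
      by (metis complex_norm_square mult.commute power2_eq_square complex_mult_cnj)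
    finally show ?thesis using r0 by simp
  qed
  have sumlist: "sum_list (map f Ks) = f (Kone I0 J0 e u) + (\<Sum>m<n. f (Em I0 J0 m))" for f :: "cmat \<Rightarrow> complex"
    unfolding Ks_def by (simp add: sum_set_upt_conv_sum_list_nat[symmetric] atLeast0LessThan comp_def)
  have kraus: "incoherent_kraus n Ks"
    unfolding incoherent_kraus_def
  proof (intro conjI ballI allI impI)
    fix p q assume pq: "p < n" "q < n"
    have "(\<Sum>m<n. mmul n (adj (Em I0 J0 m)) (Em I0 J0 m) p q) = (\<Sum>m<n. if m \<noteq> I0 \<and> m \<noteq> J0 \<and> p = m \<and> q = m then 1 else 0)"
      using Em_tp[OF I0n J0n IJ en e0] by (intro sum.cong) auto
    also have "\<dots> = (if p \<noteq> I0 \<and> p \<noteq> J0 \<and> p = q then 1 else 0)"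
      using pq by (subst sum_one[where a = p]) auto
    finally show "(\<Sum>K\<leftarrow>Ks. mmul n (adj K) K p q) = idm p q"
      unfolding sumlist Kone_tp[OF I0n J0n IJ en e0] using uu IJ by (auto simp: idm_def)
  next
    fix K \<sigma> assume K: "K \<in> set Ks" and \<sigma>: "incoherent_state n \<sigma>"
    show "is_diag n (mmul n (mmul n K \<sigma>) (adj K))"
    proof (rule incoh_col[OF _ \<sigma>])
      fix k p q assume "k < n" "p < n" "q < n" "p \<noteq> q"
      moreover from K have "K = Kone I0 J0 e u \<or> (\<exists>m. K = Em I0 J0 m)" unfolding Ks_def by auto
      ultimately show "K p k * cnj (K q k) = 0" using IJ
        by (elim disjE exE) (simp_all add: Kone_def Em_def)
    qed
  qed
  have out: "kraus_apply n Ks R p q = Sm d (1 - \<rho> j j) r (\<rho> j j) p q" if pq: "p < n" "q < n" for p q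
  proof -
    have A: "(\<Sum>m<n. mmul n (mmul n (Em I0 J0 m) R) (adj (Em I0 J0 m)) p q)
       = (if p = 0 \<and> q = 0 then (\<Sum>m<n. R m m) - R I0 I0 - R J0 J0 else 0)"
    proof -
      have "(\<Sum>m<n. mmul n (mmul n (Em I0 J0 m) R) (adj (Em I0 J0 m)) p q)
         = (\<Sum>m<n. if m \<noteq> I0 \<and> m \<noteq> J0 \<and> p = 0 \<and> q = 0 then R m m else 0)"
        using Em_conj[OF I0n J0n IJ en e0] by (intro sum.cong) auto
      also have "\<dots> = (if p = 0 \<and> q = 0 then (\<Sum>m<n. R m m) - R I0 I0 - R J0 J0 else 0)"
      proof (cases "p = 0 \<and> q = 0")
        case True
        have "(\<Sum>m<n. R m m) = (\<Sum>m<n. if m \<noteq> I0 \<and> m \<noteq> J0 then R m m else 0)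
            + (\<Sum>m<n. if m = I0 then R m m else 0) + (\<Sum>m<n. if m = J0 then R m m else 0)"
          unfolding sum.distrib[symmetric] using IJ by (intro sum.cong) auto
        then show ?thesis using True I0n J0n by simp
      next
        case False
        have "(\<Sum>m<n. if m \<noteq> I0 \<and> m \<noteq> J0 \<and> p = 0 \<and> q = 0 then R m m else 0) = 0"
          using False by (intro sum.neutral) auto
        then show ?thesis by (simp only: if_not_P[OF False])
      qed
      finally show ?thesis .
    qed
    have trR: "(\<Sum>m<n. R m m) = 1" unfolding n_def R_def using trace_kron[of d \<rho>] d2 tr1 by simp
    have RI: "R I0 I0 = \<rho> i i" "R J0 J0 = \<rho> j j" "R I0 J0 = \<rho> i j" "R J0 I0 = \<rho> j i"
      unfolding R_def I0_def J0_def kron_def proj0_def using d2 by auto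
    have c1: "\<rho> i j * cnj u = of_real r"
    proof -
      have "\<rho> i j * cnj u = (\<rho> i j * cnj (\<rho> i j)) / of_real r" unfolding u_def by simp
      also have "\<rho> i j * cnj (\<rho> i j) = of_real (r * r)" unfolding r_def
        by (metis complex_norm_square power2_eq_square complex_mult_cnj)
      finally show ?thesis using r0 by (simp add: power2_eq_square)
    qed
    have c2: "u * \<rho> j i = of_real r"
      using c1 herm[OF assms(4,3)] by (metis complex_cnj_cnj complex_cnj_mult complex_cnj_complex_of_real mult.commute)
    have c3: "u * \<rho> j j * cnj u = \<rho> j j" using uu by (simp add: algebra_simps)
    have "kraus_apply n Ks R p q = mmul n (mmul n (Kone I0 J0 e u) R) (adj (Kone I0 J0 e u)) p q
        + (\<Sum>m<n. mmul n (mmul n (Em I0 J0 m) R) (adj (Em I0 J0 m)) p q)"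
      unfolding kraus_apply_def sumlist by simp
    also have "\<dots> = Sm d (1 - \<rho> j j) r (\<rho> j j) p q"
      unfolding A Kone_right[OF I0n J0n IJ en e0] Kone_left[OF I0n J0n IJ en e0] trR RI
      unfolding Sm_def e_def[symmetric]
      using e0 c1 c2 c3 by (cases "p = 0"; cases "p = e"; cases "q = 0"; cases "q = e") simp_all
    finally show ?thesis .
  qed
  have viol: "violates_bell_inequality d (kraus_apply (d * d) Ks (kron d \<rho> proj0))"
    by (rule quantum_violation[OF d2 r0, where a = "1 - \<rho> j j" and b = "\<rho> j j"])
       (use out in \<open>auto simp: n_def R_def\<close>)
  show ?thesis using kraus viol violates_nonlocal unfolding n_def by blast
qed

end
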